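(* Let $\lambda=\frac{3+\sqrt{5}}{2}$, let $(f_n)_{n\geq 0}$ be the Fibonacci numbers, and for a positive integer $l$ let $\phi_l$ be the $l$-th cyclotomic polynomial. For every positive integer $n$, writing $\operatorname{res}$ for the resultant: (1) $\operatorname{res}\{(x-\lambda^n)(x-\lambda^{-n}),\phi_5\}=5^2(5f_n^4+5f_n^2+1)^2$ if $n$ is even, and $=(5^2f_n^4-15f_n^2+1)^2$ if $n$ is odd; (2) $\operatorname{res}\{(x-\lambda^n)(x-\lambda^{-n}),\phi_{10}\}=(5^2f_n^4+15f_n^2+1)^2$ if $n$ is even, and $=5^2(5f_n^4-5f_n^2+1)^2$ if $n$ is odd; (3) $\operatorname{res}\{(x-\lambda^n)(x-\lambda^{-n}),\phi_{25}\}=5^2(5f_{5n}^4+5f_{5n}^2+1)^2$ if $n$ is even, and $=(5^2f_{5n}^4-15f_{5n}^2+1)^2$ if $n$ is odd; (4) $\operatorname{res}\{(x-\lambda^n)(x-\lambda^{-n}),\phi_{50}\}=(5^2f_{5n}^4+15f_{5n}^2+1)^2$ if $n$ is even, and $=5^2(5f_{5n}^4-5f_{5n}^2+1)^2$ if $n$ is odd.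
   Context: The Fibonacci numbers are $f_0=0$, $f_1=1$, $f_{n+2}=f_{n+1}+f_n$. For polynomials $P,Q$ without common complex roots, $\operatorname{res}\{P,Q\}=\prod_{P(u)=0,\,Q(v)=0}(u-v)$ (roots counted with multiplicity). *)

theory Defs
  imports "HOL-Analysis.Analysis" "HOL-Computational_Algebra.Polynomial" "HOL-Number_Theory.Fib"
begin

definition cyclotomic :: "nat \<Rightarrow> complex poly" where
  "cyclotomic l = (\<Prod>k \<in> {k. 1 \<le> k \<and> k \<le> l \<and> coprime k l}.
                      [:- cis (2 * pi * real k / real l), 1:])"

definition res :: "complex poly \<Rightarrow> complex poly \<Rightarrow> complex" where
  "res P Q = (\<Prod>u \<in># proots P. \<Prod>v \<in># proots Q. u - v)"

definition lam :: real where "lam = (3 + sqrt 5) / 2"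

end

theory Submission
  imports Defs "HOL-Computational_Algebra.Fundamental_Theorem_Algebra"
begin


definition w :: "nat \<Rightarrow> nat \<Rightarrow> complex" where
  "w m k = exp (2 * of_real pi * \<i> * of_nat k / of_nat m)"

definition E :: "nat \<Rightarrow> nat set \<Rightarrow> complex \<Rightarrow> complex" where
  "E m S x = (\<Prod>k\<in>S. x - w m k)"

lemma roots_all:
  assumes "m \<ge> 1"
  shows "E m {..<m} x = x ^ m - 1"
proof -
  define p :: "complex poly" where "p = monom 1 m - 1"
  define q :: "complex poly" where "q = (\<Prod>k<m. [:- w m k, 1:])"
  have dq: "degree q = m" unfolding q_def
    by (subst degree_prod_eq_sum_degree) auto
  have lq: "lead_coeff q = 1" unfolding q_def by (simp add: lead_coeff_prod)
  have dp: "degree p \<le> m" unfolding p_def using assms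
    by (intro degree_diff_le) (auto simp: degree_monom_le)
  have cp: "coeff p m = 1" unfolding p_def using assms by (simp add: coeff_monom)
  have "p = q"
  proof (rule poly_eqI_degree_lead_coeff[where n = m and A = "{z. z ^ m = 1}"])
    show "coeff p m = coeff q m" using cp lq dq by simp
    show "m \<le> card {z::complex. z ^ m = 1}" using card_complex_roots_unity[OF assms] by simp
    show "degree p \<le> m" using dp by simp
    show "degree q \<le> m" using dq by simp
    fix z :: complex assume "z \<in> {z. z ^ m = 1}"
    then obtain j where j: "j < m" "z = w m j"
      using complex_roots_unity[OF assms] unfolding w_def by auto
    have "poly q z = 0" unfolding q_def poly_prod using j
      by (intro prod_zero bexI[where x = j]) auto
    moreover have "poly p z = 0" using \<open>z \<in> _\<close> unfolding p_def by (simp add: poly_monom)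
    ultimately show "poly p z = poly q z" by simp
  qed
  hence "poly q x = poly p x" by simp
  thus ?thesis unfolding E_def q_def p_def poly_prod by (simp add: poly_monom)
qed

lemma roots_sub:
  assumes "d > 0" "m > 0" "d dvd m"
  shows "E m {k. k < m \<and> d dvd k} x = x ^ (m div d) - 1"
proof -
  obtain e where e: "m = d * e" using assms by blast
  have e0: "e \<ge> 1" using e assms by (cases e) auto
  have "{k. k < m \<and> d dvd k} = (\<lambda>j. d * j) ` {..<e}"
    using e assms by (auto simp: image_def)
  moreover have "inj_on (\<lambda>j. d * j) {..<e}" using assms by (auto simp: inj_on_def)
  ultimately have "E m {k. k < m \<and> d dvd k} x = (\<Prod>j<e. x - w m (d * j))"
    unfolding E_def by (simp add: prod.reindex)
  also have "\<dots> = E e {..<e} x" unfolding E_def w_def using e assms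
    by (intro prod.cong refl) (simp add: field_simps)
  also have "\<dots> = x ^ e - 1" using roots_all[OF e0] .
  finally show ?thesis using e assms by simp
qed

lemma poly_cyc:
  assumes "l > 1"
  shows "poly (cyclotomic l) x = E l {k. k < l \<and> coprime k l} x"
proof -
  have "{k. 1 \<le> k \<and> k \<le> l \<and> coprime k l} = {k. k < l \<and> coprime k l}"
  proof (intro set_eqI iffI)
    fix k assume "k \<in> {k. 1 \<le> k \<and> k \<le> l \<and> coprime k l}"
    thus "k \<in> {k. k < l \<and> coprime k l}" using assms by (auto simp: le_less)
  next
    fix k assume k: "k \<in> {k. k < l \<and> coprime k l}"
    have "k \<noteq> 0" proof
      assume "k = 0" thus False using k assms by auto
    qed
    thus "k \<in> {k. 1 \<le> k \<and> k \<le> l \<and> coprime k l}" using k by auto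
  qed
  thus ?thesis unfolding cyclotomic_def E_def poly_prod w_def
    by (simp add: cis_conv_exp mult_ac)
qed



lemma cop_prime: "prime (p::nat) \<Longrightarrow> coprime k p \<longleftrightarrow> \<not> p dvd k"
  by (metis coprime_commute coprime_absorb_left not_prime_unit prime_imp_coprime)

lemma p5: "prime (5::nat)"
proof -
  have "{2..<5::nat} = {2,3,4}" by auto
  thus ?thesis by (simp add: prime_nat_iff')
qed
lemma p2: "prime (2::nat)" by simp

lemma cop25: "coprime k (25::nat) \<longleftrightarrow> \<not> 5 dvd k"
proof -
  have "coprime k (25::nat) \<longleftrightarrow> coprime k ((5::nat)^2)" by simp
  also have "\<dots> \<longleftrightarrow> coprime k (5::nat)" using coprime_power_right_iff[of k "5::nat" 2] by simp
  finally show ?thesis using cop_prime[OF p5] by simp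
qed

lemma cop5: "coprime k (5::nat) \<longleftrightarrow> \<not> 5 dvd k"
  using cop_prime[OF p5] by simp

lemma cop10: "coprime k (10::nat) \<longleftrightarrow> \<not> 2 dvd k \<and> \<not> 5 dvd k"
proof -
  have "coprime k (10::nat) \<longleftrightarrow> coprime k ((2::nat) * 5)" by simp
  also have "\<dots> \<longleftrightarrow> coprime k (2::nat) \<and> coprime k (5::nat)" by (rule coprime_mult_right_iff)
  finally show ?thesis using cop_prime[OF p5] cop_prime[OF p2] by simp
qed

lemma cop50: "coprime k (50::nat) \<longleftrightarrow> \<not> 2 dvd k \<and> \<not> 5 dvd k"
proof -
  have "coprime k (50::nat) \<longleftrightarrow> coprime k ((2::nat) * 25)" by simp
  also have "\<dots> \<longleftrightarrow> coprime k (2::nat) \<and> coprime k (25::nat)" by (rule coprime_mult_right_iff)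
  finally show ?thesis using cop25 cop_prime[OF p2] by simp
qed

lemma split5:
  assumes "l > 1" "5 dvd l" "\<And>k. coprime k l \<longleftrightarrow> \<not> 5 dvd k"
  shows "x ^ l - 1 = poly (cyclotomic l) x * (x ^ (l div 5) - 1)"
proof -
  have "x ^ l - 1 = E l {..<l} x" using roots_all assms by simp
  also have "\<dots> = E l ({..<l} - {k. k < l \<and> 5 dvd k}) x * E l {k. k < l \<and> 5 dvd k} x"
    unfolding E_def by (subst prod.subset_diff[where B = "{k. k < l \<and> 5 dvd k}"]) auto
  also have "{..<l} - {k. k < l \<and> 5 dvd k} = {k. k < l \<and> coprime k l}" using assms(3) by auto
  also have "E l {k. k < l \<and> coprime k l} x = poly (cyclotomic l) x" using poly_cyc assms by simp
  also have "E l {k. k < l \<and> 5 dvd k} x = x ^ (l div 5) - 1" using roots_sub assms by simp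
  finally show ?thesis .
qed

lemma split10:
  assumes "l > 1" "10 dvd l" "\<And>k. coprime k l \<longleftrightarrow> \<not> 2 dvd k \<and> \<not> 5 dvd k"
  shows "(x ^ l - 1) * (x ^ (l div 10) - 1) = poly (cyclotomic l) x * (x ^ (l div 2) - 1) * (x ^ (l div 5) - 1)"
proof -
  define B2 where "B2 = {k. k < l \<and> 2 dvd k}"
  define B5 where "B5 = {k. k < l \<and> 5 dvd k}"
  have i: "B2 \<inter> B5 = {k. k < l \<and> 10 dvd k}" unfolding B2_def B5_def by auto
  have "x ^ l - 1 = E l {..<l} x" using roots_all assms by simp
  also have "\<dots> = E l ({..<l} - (B2 \<union> B5)) x * E l (B2 \<union> B5) x"
    unfolding E_def by (subst prod.subset_diff[where B = "B2 \<union> B5"]) (auto simp: B2_def B5_def)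
  also have "{..<l} - (B2 \<union> B5) = {k. k < l \<and> coprime k l}" using assms(3) by (auto simp: B2_def B5_def)
  also have "E l {k. k < l \<and> coprime k l} x = poly (cyclotomic l) x" using poly_cyc assms by simp
  finally have 1: "x ^ l - 1 = poly (cyclotomic l) x * E l (B2 \<union> B5) x" .
  have 2: "E l (B2 \<union> B5) x * E l (B2 \<inter> B5) x = E l B2 x * E l B5 x"
    unfolding E_def by (rule prod.union_inter) (auto simp: B2_def B5_def)
  have "E l B2 x = x ^ (l div 2) - 1" unfolding B2_def using roots_sub assms by auto
  moreover have "E l B5 x = x ^ (l div 5) - 1" unfolding B5_def using roots_sub assms by auto
  moreover have "E l (B2 \<inter> B5) x = x ^ (l div 10) - 1" unfolding i using roots_sub assms by auto
  ultimately show ?thesis using 1 2 by (metis mult.assoc)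
qed

lemma cyc5: "x \<noteq> 1 \<Longrightarrow> poly (cyclotomic 5) x = x^4 + x^3 + x^2 + x + 1"
proof -
  assume x: "x \<noteq> 1"
  have "x ^ 5 - 1 = poly (cyclotomic 5) x * (x - 1)" using split5[of 5 x] cop5 by simp
  moreover have "x ^ 5 - 1 = (x^4 + x^3 + x^2 + x + 1) * (x - 1)" by algebra
  ultimately show ?thesis using x by simp
qed



lemma cyc10:
  assumes "x \<noteq> 1" "x \<noteq> -1" "x ^ 5 \<noteq> 1"
  shows "poly (cyclotomic 10) x = x^4 - x^3 + x^2 - x + 1"
proof -
  have h: "(x ^ 10 - 1) * (x - 1) = poly (cyclotomic 10) x * (x^2 - 1) * (x ^ 5 - 1)"
    using split10[of 10 x] cop10 by simp
  have a1: "(x ^ 10 - 1) * (x - 1) = ((x^4 - x^3 + x^2 - x + 1) * (x + 1)) * ((x - 1) * (x^5 - 1))" by algebra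
  have a2: "poly (cyclotomic 10) x * (x^2 - 1) * (x ^ 5 - 1) = (poly (cyclotomic 10) x * (x + 1)) * ((x - 1) * (x^5 - 1))" by algebra
  have e: "((x^4 - x^3 + x^2 - x + 1) * (x + 1)) * ((x - 1) * (x^5 - 1)) = (poly (cyclotomic 10) x * (x + 1)) * ((x - 1) * (x^5 - 1))"
    using h unfolding a1 a2 .
  have nz: "(x - 1) * (x^5 - 1) \<noteq> 0" using assms(1,3) by simp
  have "(x^4 - x^3 + x^2 - x + 1) * (x + 1) = poly (cyclotomic 10) x * (x + 1)"
    using mult_right_cancel[OF nz] e by blast
  moreover have "x + 1 \<noteq> 0"
  proof
    assume "x + 1 = 0" hence "x = -1" by (simp add: eq_neg_iff_add_eq_0)
    thus False using assms(2) by simp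
  qed
  ultimately show ?thesis by simp
qed

lemma cyc25:
  assumes "x ^ 5 \<noteq> 1"
  shows "poly (cyclotomic 25) x = (x^5)^4 + (x^5)^3 + (x^5)^2 + x^5 + 1"
proof -
  have "x ^ 25 - 1 = poly (cyclotomic 25) x * (x^5 - 1)" using split5[of 25 x] cop25 by simp
  moreover have "x ^ 25 - 1 = ((x^5)^4 + (x^5)^3 + (x^5)^2 + x^5 + 1) * (x^5 - 1)" by algebra
  ultimately show ?thesis using assms by simp
qed

lemma cyc50:
  assumes "x ^ 5 \<noteq> 1" "x ^ 5 \<noteq> -1" "x ^ 25 \<noteq> 1"
  shows "poly (cyclotomic 50) x = (x^5)^4 - (x^5)^3 + (x^5)^2 - x^5 + 1"
proof -
  have h: "(x ^ 50 - 1) * (x^5 - 1) = poly (cyclotomic 50) x * (x^25 - 1) * (x ^ 10 - 1)"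
    using split10[of 50 x] cop50 by simp
  have a1: "(x ^ 50 - 1) * (x^5 - 1) = (((x^5)^4 - (x^5)^3 + (x^5)^2 - x^5 + 1) * (x^5 + 1)) * ((x^25 - 1) * (x^5 - 1))" by algebra
  have a2: "poly (cyclotomic 50) x * (x^25 - 1) * (x ^ 10 - 1) = (poly (cyclotomic 50) x * (x^5 + 1)) * ((x^25 - 1) * (x^5 - 1))" by algebra
  have e: "(((x^5)^4 - (x^5)^3 + (x^5)^2 - x^5 + 1) * (x^5 + 1)) * ((x^25 - 1) * (x^5 - 1)) = (poly (cyclotomic 50) x * (x^5 + 1)) * ((x^25 - 1) * (x^5 - 1))"
    using h unfolding a1 a2 .
  have nz: "(x^25 - 1) * (x^5 - 1) \<noteq> 0" using assms(1,3) by simp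
  have "((x^5)^4 - (x^5)^3 + (x^5)^2 - x^5 + 1) * (x^5 + 1) = poly (cyclotomic 50) x * (x^5 + 1)"
    using mult_right_cancel[OF nz] e by blast
  moreover have "x^5 + 1 \<noteq> 0"
  proof
    assume "x^5 + 1 = 0" hence "x^5 = -1" by (simp add: eq_neg_iff_add_eq_0)
    thus False using assms(2) by simp
  qed
  ultimately show ?thesis by simp
qed

lemma res_eval:
  assumes "lead_coeff Q = 1"
  shows "res ([:-a,1:] * [:-b,1:]) Q = poly Q a * poly Q b"
proof -
  have m: "(\<Prod>v\<in>#proots Q. u - v) = poly Q u" for u
  proof -
    have "poly Q u = poly (smult (lead_coeff Q) (\<Prod>x\<in>#proots Q. [:-x, 1:])) u"
      using complex_poly_decompose_multiset[of Q] by simp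
    also have "\<dots> = (\<Prod>v\<in>#proots Q. u - v)" using assms by (simp add: poly_prod_mset)
    finally show ?thesis by simp
  qed
  have "proots ([:-a,1:] * [:-b,1:]) = {#a, b#}"
    by (subst proots_mult) auto
  thus ?thesis unfolding res_def using m by simp
qed

lemma lc_cyc: "lead_coeff (cyclotomic l) = 1"
  unfolding cyclotomic_def by (simp add: lead_coeff_prod)

lemma algG:
  fixes a b :: complex and c :: complex
  assumes "a * b = 1" and cc: "c = 1 \<or> c = -1"
  shows "(a^4+c*a^3+a^2+c*a+1)*(b^4+c*b^3+b^2+c*b+1) = ((a+b)^2+c*(a+b)-1)^2"
proof -
  define Q where "Q = a^2+c*a+1+c*b+b^2"
  have ss: "c*c = 1" using cc by auto
  have h1: "a^4+c*a^3+a^2+c*a+1 = a^2*Q + c*(a - a*(a*b)) + (1 - (a*b)^2)" unfolding Q_def by algebra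
  have h2: "b^4+c*b^3+b^2+c*b+1 = b^2*Q + c*(b - b*(a*b)) + (1 - (a*b)^2)" unfolding Q_def by algebra
  have h3: "Q = (a+b)^2+c*(a+b)-1 + (2 - 2*(a*b))" unfolding Q_def by algebra
  have "(a^4+c*a^3+a^2+c*a+1)*(b^4+c*b^3+b^2+c*b+1) = (a*b)^2 * Q^2"
    unfolding h1 h2 using assms(1) by (simp add: power2_eq_square algebra_simps)
  also have "\<dots> = ((a+b)^2+c*(a+b)-1)^2" using h3 assms(1) by simp
  finally show ?thesis .
qed

lemma lam_fib: "lam ^ n + inverse (lam ^ n) = 5 * real (fib n)^2 + 2 * (-1)^n"
proof -
  define p :: real where "p = (1 + sqrt 5) / 2"
  define q :: real where "q = (1 - sqrt 5) / 2"
  have s: "sqrt 5 ^ 2 = (5::real)" by simp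
  have pp: "p^2 = lam" unfolding p_def lam_def by (simp add: power2_eq_square field_simps)
  have pq: "p * q = -1" unfolding p_def q_def by (simp add: field_simps)
  have qq: "q^2 = inverse lam"
  proof -
    have "lam * q^2 = (p*q)^2" using pp by (simp add: power_mult_distrib)
    also have "\<dots> = 1" using pq by simp
    finally have "lam * q^2 = 1" .
    from inverse_unique[OF this] show ?thesis by simp
  qed
  have F: "real (fib n) = (p^n - q^n) / sqrt 5" unfolding p_def q_def by (rule fib_closed_form)
  have "5 * real (fib n)^2 = (p^n - q^n)^2" unfolding F using s by (simp add: power_divide)
  also have "\<dots> = (p^2)^n + (q^2)^n - 2 * (p*q)^n" by (simp add: power2_eq_square power_mult_distrib algebra_simps)
  also have "\<dots> = lam ^ n + inverse (lam ^ n) - 2 * (-1)^n" using pp qq pq by (simp add: power_inverse)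
  finally show ?thesis by simp
qed



lemma nz:
  fixes x :: real
  assumes "x > 0" "x \<noteq> 1" "k > 0"
  shows "complex_of_real x ^ k \<noteq> 1" "complex_of_real x ^ k \<noteq> -1"
proof -
  have "x ^ k \<noteq> 1"
  proof
    assume "x ^ k = 1"
    hence "x ^ k = 1 ^ k" by simp
    hence "x = 1" using power_eq_imp_eq_base[of x k 1] assms by simp
    thus False using assms by simp
  qed
  moreover have "x ^ k > 0" using assms by simp
  ultimately have h1: "x ^ k \<noteq> 1" and h2: "x ^ k \<noteq> -1" by auto
  have e: "complex_of_real x ^ k = complex_of_real (x ^ k)" by simp
  show "complex_of_real x ^ k \<noteq> 1" unfolding e using h1 of_real_eq_1_iff by blast
  show "complex_of_real x ^ k \<noteq> -1"
  proof
    assume "complex_of_real x ^ k = -1"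
    hence "complex_of_real (x ^ k) = complex_of_real (-1)" unfolding e by simp
    hence "x ^ k = -1" by (rule of_real_eq_iff[THEN iffD1])
    thus False using h2 by simp
  qed
qed

lemma id1: "((5*F^2+2)^2 + (5*F^2+2) - 1)^2 = (5::complex)^2 * (5*F^4+5*F^2+1)^2" by algebra
lemma id2: "((5*F^2-2)^2 + (5*F^2-2) - 1)^2 = ((5::complex)^2 * F^4 - 15*F^2+1)^2" by algebra
lemma id3: "((5*F^2+2)^2 - (5*F^2+2) - 1)^2 = ((5::complex)^2 * F^4 + 15*F^2+1)^2" by algebra
lemma id4: "((5*F^2-2)^2 - (5*F^2-2) - 1)^2 = (5::complex)^2 * (5*F^4-5*F^2+1)^2" by algebra

lemma both:
  fixes a b t :: complex
  assumes "a * b = 1" "a + b = t"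
    "a \<noteq> 1" "a \<noteq> -1" "a ^ 5 \<noteq> 1" "b \<noteq> 1" "b \<noteq> -1" "b ^ 5 \<noteq> 1"
  shows "res ([:-a,1:] * [:-b,1:]) (cyclotomic 5) = (t^2 + t - 1)^2"
    "res ([:-a,1:] * [:-b,1:]) (cyclotomic 10) = (t^2 - t - 1)^2"
proof -
  show "res ([:-a,1:] * [:-b,1:]) (cyclotomic 5) = (t^2 + t - 1)^2"
    using res_eval[OF lc_cyc] cyc5 algG[of a b 1] assms by simp
  show "res ([:-a,1:] * [:-b,1:]) (cyclotomic 10) = (t^2 - t - 1)^2"
    using res_eval[OF lc_cyc] cyc10 algG[of a b "-1"] assms by simp
qed

lemma both5:
  fixes a b t :: complex
  assumes "a ^ 5 * b ^ 5 = 1" "a ^ 5 + b ^ 5 = t"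
    "a ^ 5 \<noteq> 1" "a ^ 5 \<noteq> -1" "a ^ 25 \<noteq> 1" "b ^ 5 \<noteq> 1" "b ^ 5 \<noteq> -1" "b ^ 25 \<noteq> 1"
  shows "res ([:-a,1:] * [:-b,1:]) (cyclotomic 25) = (t^2 + t - 1)^2"
    "res ([:-a,1:] * [:-b,1:]) (cyclotomic 50) = (t^2 - t - 1)^2"
proof -
  show "res ([:-a,1:] * [:-b,1:]) (cyclotomic 25) = (t^2 + t - 1)^2"
    using res_eval[OF lc_cyc] cyc25 algG[of "a^5" "b^5" 1] assms by simp
  show "res ([:-a,1:] * [:-b,1:]) (cyclotomic 50) = (t^2 - t - 1)^2"
    using res_eval[OF lc_cyc] cyc50 algG[of "a^5" "b^5" "-1"] assms by simp
qed



theorem mainTheorem6: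
  fixes n :: nat
  assumes "n \<ge> 1"
  defines "P \<equiv> [:- complex_of_real (lam ^ n), 1:] * [:- complex_of_real (inverse (lam ^ n)), 1:]"
  defines "f \<equiv> int (fib n)"
  defines "g \<equiv> int (fib (5 * n))"
  shows
   "res P (cyclotomic 5) = of_int (if even n then 5^2 * (5 * f^4 + 5 * f^2 + 1)^2
                                   else (5^2 * f^4 - 15 * f^2 + 1)^2)
  \<and> res P (cyclotomic 10) = of_int (if even n then (5^2 * f^4 + 15 * f^2 + 1)^2
                                   else 5^2 * (5 * f^4 - 5 * f^2 + 1)^2)
  \<and> res P (cyclotomic 25) = of_int (if even n then 5^2 * (5 * g^4 + 5 * g^2 + 1)^2
                                   else (5^2 * g^4 - 15 * g^2 + 1)^2)
  \<and> res P (cyclotomic 50) = of_int (if even n then (5^2 * g^4 + 15 * g^2 + 1)^2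
                                   else 5^2 * (5 * g^4 - 5 * g^2 + 1)^2)"
proof -
  define r where "r = lam ^ n"
  have s5: "sqrt (5::real) > 0" by simp
  have s6: "2 < 3 + sqrt (5::real)" using s5 by linarith
  have lam1: "lam > 1" unfolding lam_def using s6 by (simp add: less_divide_eq)
  have r1: "r > 1" unfolding r_def using lam1 assms by (simp add: one_less_power)
  have ri0: "inverse r > 0" "inverse r \<noteq> 1" using r1 by auto
  have r0: "r > 0" "r \<noteq> 1" using r1 by auto
  define a where "a = complex_of_real r"
  define b where "b = complex_of_real (inverse r)"
  have P: "P = [:-a,1:] * [:-b,1:]" unfolding P_def a_def b_def r_def ..
  have ab: "a * b = 1" unfolding a_def b_def using r0
    by (simp only: of_real_mult[symmetric] right_inverse of_real_1)
  define F where "F = complex_of_nat (fib n)"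
  define G where "G = complex_of_nat (fib (5*n))"
  have sum1: "a + b = 5 * F^2 + 2 * (-1)^n"
  proof -
    have "a + b = complex_of_real (r + inverse r)" unfolding a_def b_def by simp
    also have "\<dots> = complex_of_real (5 * real (fib n)^2 + 2 * (-1)^n)" unfolding r_def lam_fib ..
    finally show ?thesis unfolding F_def by simp
  qed
  have a5: "a ^ 5 = complex_of_real (lam ^ (5*n))" unfolding a_def r_def
    by (simp add: power_mult[symmetric] mult.commute)
  have b5: "b ^ 5 = complex_of_real (inverse (lam ^ (5*n)))" unfolding b_def r_def
    by (simp add: power_mult[symmetric] mult.commute power_inverse)
  have sum5: "a^5 + b^5 = 5 * G^2 + 2 * (-1)^n"
  proof -
    have "a^5 + b^5 = complex_of_real (lam ^ (5*n) + inverse (lam ^ (5*n)))" unfolding a5 b5 by simp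
    also have "\<dots> = complex_of_real (5 * real (fib (5*n))^2 + 2 * (-1)^(5*n))" unfolding lam_fib ..
    also have "(-1::real)^(5*n) = (-1)^n" by (simp add: power_mult)
    finally show ?thesis unfolding G_def by simp
  qed
  have ab5: "a^5 * b^5 = 1" using ab by (simp add: power_mult_distrib[symmetric])
  have na: "a \<noteq> 1" "a \<noteq> -1" "a^5 \<noteq> 1" "a^5 \<noteq> -1" "a^25 \<noteq> 1"
    using nz[OF r0, of 1] nz[OF r0, of 5] nz[OF r0, of 25] unfolding a_def by auto
  have nb: "b \<noteq> 1" "b \<noteq> -1" "b^5 \<noteq> 1" "b^5 \<noteq> -1" "b^25 \<noteq> 1"
    using nz[OF ri0, of 1] nz[OF ri0, of 5] nz[OF ri0, of 25] unfolding b_def by auto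
  note R = both[OF ab sum1 na(1,2,3) nb(1,2,3)] both5[OF ab5 sum5 na(3,4,5) nb(3,4,5)]
  have fF: "of_int f = F" "of_int g = G" unfolding f_def g_def F_def G_def by simp_all
  show ?thesis
  proof (cases "even n")
    case True
    hence T: "5 * F^2 + 2 * (-1)^n = 5 * F^2 + 2" "5 * G^2 + 2 * (-1)^n = 5 * G^2 + 2" by simp_all
    have c5: "res P (cyclotomic 5) = (5::complex)^2 * (5*F^4+5*F^2+1)^2"
      using R(1) unfolding T P id1 .
    have c10: "res P (cyclotomic 10) = ((5::complex)^2 * F^4 + 15*F^2+1)^2"
      using R(2) unfolding T P id3 .
    have c25: "res P (cyclotomic 25) = (5::complex)^2 * (5*G^4+5*G^2+1)^2"
      using R(3) unfolding T P id1 .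
    have c50: "res P (cyclotomic 50) = ((5::complex)^2 * G^4 + 15*G^2+1)^2"
      using R(4) unfolding T P id3 .
    show ?thesis using c5 c10 c25 c50 True fF by simp
  next
    case False
    hence T: "5 * F^2 + 2 * (-1)^n = 5 * F^2 - 2" "5 * G^2 + 2 * (-1)^n = 5 * G^2 - 2" by simp_all
    have c5: "res P (cyclotomic 5) = ((5::complex)^2 * F^4 - 15*F^2+1)^2"
      using R(1) unfolding T P id2 .
    have c10: "res P (cyclotomic 10) = (5::complex)^2 * (5*F^4-5*F^2+1)^2"
      using R(2) unfolding T P id4 .
    have c25: "res P (cyclotomic 25) = ((5::complex)^2 * G^4 - 15*G^2+1)^2"
      using R(3) unfolding T P id2 .
    have c50: "res P (cyclotomic 50) = (5::complex)^2 * (5*G^4-5*G^2+1)^2"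
      using R(4) unfolding T P id4 .
    show ?thesis using c5 c10 c25 c50 False fF by simp
  qed
qed

end
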